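(* Let $G=(V,E,s_0,s_1)$ be a switch graph and $o,d\in V$ with $o\neq d$, such that $\textsc{Run}(G,o,d)$ terminates. Let $\mathbf{x}(G,o,d):E\to\mathbb{N}_0$ (the run profile) assign to each edge the number of times it is traversed during $\textsc{Run}(G,o,d)$. Then $\mathbf{x}(G,o,d)$ is a switching flow.
   Context: A switch graph is a 4-tuple $G=(V,E,s_0,s_1)$ where $V$ is a finite vertex set, $s_0,s_1:V\to V$, and $E=\{(v,s_0(v)):v\in V\}\cup\{(v,s_1(v)):v\in V\}$ (loops allowed; possibly $s_0(v)=s_1(v)$). The procedure $\textsc{Run}(G,o,d)$: maintain arrays $\mathtt{s\_curr},\mathtt{s\_next}$ indexed by $V$, initially $\mathtt{s\_curr}[v]=s_0(v)$, $\mathtt{s\_next}[v]=s_1(v)$; set $v:=o$; while $v\neq d$: $w:=\mathtt{s\_curr}[v]$, swap $\mathtt{s\_curr}[v],\mathtt{s\_next}[v]$, $v:=w$ (traversing edge $(v,w)$). For $v\in V$, $E^+(v)$ and $E^-(v)$ denote the outgoing and incoming edges of $v$. A switching flow is a function $\mathbf{x}:E\to\mathbb{N}_0$, $e\mapsto x_e$, such that for all $v\in V$: (a) $\sum_{e\in E^+(v)}x_e-\sum_{e\in E^-(v)}x_e$ equals $1$ if $v=o$, $-1$ if $v=d$, and $0$ otherwise; and (b) $0\le x_{(v,s_1(v))}\le x_{(v,s_0(v))}\le x_{(v,s_1(v))}+1$. *)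

theory Defs
  imports Main
begin

text \<open>A switch graph (V, E, s0, s1): finite vertex set V, successor maps s0 s1 on V.
  The edge set E is determined by V, s0, s1.\<close>
definition switch_graph :: "'a set \<Rightarrow> ('a \<Rightarrow> 'a) \<Rightarrow> ('a \<Rightarrow> 'a) \<Rightarrow> bool" where
  "switch_graph V s0 s1 \<longleftrightarrow> finite V \<and> (\<forall>v\<in>V. s0 v \<in> V \<and> s1 v \<in> V)"

definition sw_edges :: "'a set \<Rightarrow> ('a \<Rightarrow> 'a) \<Rightarrow> ('a \<Rightarrow> 'a) \<Rightarrow> ('a \<times> 'a) set" where
  "sw_edges V s0 s1 = {(v, s0 v) | v. v \<in> V} \<union> {(v, s1 v) | v. v \<in> V}"

text \<open>One iteration of the loop body of Run: state is (current vertex, s_curr, s_next).\<close>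
fun run_step :: "'a \<times> ('a \<Rightarrow> 'a) \<times> ('a \<Rightarrow> 'a) \<Rightarrow> 'a \<times> ('a \<Rightarrow> 'a) \<times> ('a \<Rightarrow> 'a)" where
  "run_step (v, sc, sn) = (sc v, sc(v := sn v), sn(v := sc v))"

definition run_state :: "('a \<Rightarrow> 'a) \<Rightarrow> ('a \<Rightarrow> 'a) \<Rightarrow> 'a \<Rightarrow> nat \<Rightarrow> 'a \<times> ('a \<Rightarrow> 'a) \<times> ('a \<Rightarrow> 'a)" where
  "run_state s0 s1 org n = (run_step ^^ n) (org, s0, s1)"

text \<open>Vertex occupied after n iterations of the loop body (ignoring the stop test).\<close>
definition run_pos :: "('a \<Rightarrow> 'a) \<Rightarrow> ('a \<Rightarrow> 'a) \<Rightarrow> 'a \<Rightarrow> nat \<Rightarrow> 'a" where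
  "run_pos s0 s1 org n = fst (run_state s0 s1 org n)"

definition run_terminates :: "('a \<Rightarrow> 'a) \<Rightarrow> ('a \<Rightarrow> 'a) \<Rightarrow> 'a \<Rightarrow> 'a \<Rightarrow> bool" where
  "run_terminates s0 s1 org dst \<longleftrightarrow> (\<exists>n. run_pos s0 s1 org n = dst)"

definition run_length :: "('a \<Rightarrow> 'a) \<Rightarrow> ('a \<Rightarrow> 'a) \<Rightarrow> 'a \<Rightarrow> 'a \<Rightarrow> nat" where
  "run_length s0 s1 org dst = (LEAST n. run_pos s0 s1 org n = dst)"

definition run_profile :: "('a \<Rightarrow> 'a) \<Rightarrow> ('a \<Rightarrow> 'a) \<Rightarrow> 'a \<Rightarrow> 'a \<Rightarrow> 'a \<times> 'a \<Rightarrow> nat" where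
  "run_profile s0 s1 org dst e =
     card {i. i < run_length s0 s1 org dst \<and> (run_pos s0 s1 org i, run_pos s0 s1 org (Suc i)) = e}"

definition out_edges :: "('a \<times> 'a) set \<Rightarrow> 'a \<Rightarrow> ('a \<times> 'a) set" where
  "out_edges E v = {e \<in> E. fst e = v}"

definition in_edges :: "('a \<times> 'a) set \<Rightarrow> 'a \<Rightarrow> ('a \<times> 'a) set" where
  "in_edges E v = {e \<in> E. snd e = v}"

text \<open>Switching flow (values of x outside E are irrelevant).\<close>
definition switching_flow :: "'a set \<Rightarrow> ('a \<Rightarrow> 'a) \<Rightarrow> ('a \<Rightarrow> 'a) \<Rightarrow> 'a \<Rightarrow> 'a \<Rightarrow> ('a \<times> 'a \<Rightarrow> nat) \<Rightarrow> bool" where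
  "switching_flow V s0 s1 org dst x \<longleftrightarrow>
     (\<forall>v\<in>V.
        int (\<Sum>e\<in>out_edges (sw_edges V s0 s1) v. x e) - int (\<Sum>e\<in>in_edges (sw_edges V s0 s1) v. x e)
          = (if v = org then 1 else if v = dst then -1 else 0)
      \<and> x (v, s1 v) \<le> x (v, s0 v) \<and> x (v, s0 v) \<le> x (v, s1 v) + 1)"

end

theory Submission
  imports Defs
begin

lemma card_Suc_split:
  "card {i. i < Suc n \<and> P i} = card {i. i < n \<and> P i} + (if P n then 1 else 0)"
proof -
  have "{i. i < Suc n \<and> P i} = {i. i < n \<and> P i} \<union> (if P n then {n} else {})"
    by (auto simp: less_Suc_eq)
  thus ?thesis by auto
qed

context
  fixes s0 s1 :: "'a \<Rightarrow> 'a" and org :: 'a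
begin

abbreviation "p \<equiv> run_pos s0 s1 org"
definition "cnt n v = card {i. i < n \<and> p i = v}"
definition "xx n e = card {i. i < n \<and> (p i, p (Suc i)) = e}"

lemma st_Suc: "run_state s0 s1 org (Suc n) = run_step (run_state s0 s1 org n)"
  by (simp add: run_state_def)

lemma inv:
  "fst (snd (run_state s0 s1 org n)) v = (if even (cnt n v) then s0 v else s1 v) \<and>
   snd (snd (run_state s0 s1 org n)) v = (if even (cnt n v) then s1 v else s0 v)"
proof (induction n arbitrary: v)
  case 0
  then show ?case by (simp add: run_state_def cnt_def)
next
  case (Suc n)
  obtain w sc sn where e: "run_state s0 s1 org n = (w, sc, sn)" by (metis prod.exhaust)
  have pw: "p n = w" using e by (simp add: run_pos_def)
  have c: "cnt (Suc n) v = cnt n v + (if w = v then 1 else 0)"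
    unfolding cnt_def using card_Suc_split[of n "\<lambda>i. p i = v"] pw by auto
  show ?case using Suc[of v] e c by (auto simp: st_Suc)
qed

lemma p_Suc: "p (Suc n) = (if even (cnt n (p n)) then s0 (p n) else s1 (p n))"
proof -
  obtain w sc sn where e: "run_state s0 s1 org n = (w, sc, sn)" by (metis prod.exhaust)
  show ?thesis using inv[of n w] e by (simp add: run_pos_def st_Suc)
qed

lemma p_in: "org \<in> V \<Longrightarrow> switch_graph V s0 s1 \<Longrightarrow> p n \<in> V"
proof (induction n)
  case 0 then show ?case by (simp add: run_pos_def run_state_def)
next
  case (Suc n)
  then show ?case unfolding p_Suc[of n] by (simp add: switch_graph_def)
qed

lemma xx_Suc: "xx (Suc n) e = xx n e + (if (p n, p (Suc n)) = e then 1 else 0)"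
  unfolding xx_def by (rule card_Suc_split)

lemma sum_xx: "finite A \<Longrightarrow> (\<Sum>e\<in>A. xx n e) = card {i. i < n \<and> (p i, p (Suc i)) \<in> A}"
proof (induction n)
  case 0
  then show ?case by (simp add: xx_def)
next
  case (Suc n)
  have "(\<Sum>e\<in>A. xx (Suc n) e) = (\<Sum>e\<in>A. xx n e) + (\<Sum>e\<in>A. if (p n, p (Suc n)) = e then 1 else 0)"
    by (simp add: xx_Suc sum.distrib)
  also have "(\<Sum>e\<in>A. if (p n, p (Suc n)) = e then 1 else 0) = (if (p n, p (Suc n)) \<in> A then 1 else (0::nat))"
    using Suc.prems by (simp add: sum.delta)
  finally show ?case using Suc card_Suc_split[of n "\<lambda>i. (p i, p (Suc i)) \<in> A"] by simp
qed

lemma telescope: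
  "card {i. i < n \<and> p i = v} + (if p n = v then 1 else 0)
   = card {i. i < n \<and> p (Suc i) = v} + (if p 0 = v then 1 else 0)"
proof (induction n)
  case 0 then show ?case by simp
next
  case (Suc n)
  then show ?case using card_Suc_split[of n "\<lambda>i. p i = v"] card_Suc_split[of n "\<lambda>i. p (Suc i) = v"]
    by simp
qed

lemma telescope_int:
  assumes "p n = d" "p 0 = org" "org \<noteq> d"
  shows "int (card {i. i < n \<and> p i = v}) - int (card {i. i < n \<and> p (Suc i) = v})
     = (if v = org then 1 else if v = d then -1 else 0)"
  using telescope[of n v] assms by (cases "v = org"; cases "v = d"; simp)

lemma xx_sw:
  "s0 v \<noteq> s1 v \<Longrightarrow> xx n (v, s0 v) = (cnt n v + 1) div 2 \<and> xx n (v, s1 v) = cnt n v div 2"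
proof (induction n)
  case 0 then show ?case by (simp add: xx_def cnt_def)
next
  case (Suc n)
  have c: "cnt (Suc n) v = cnt n v + (if p n = v then 1 else 0)"
    unfolding cnt_def using card_Suc_split[of n "\<lambda>i. p i = v"] by auto
  show ?case
  proof (cases "p n = v")
    case True
    then show ?thesis using Suc c p_Suc[of n] by (auto simp: xx_Suc)
  next
    case False
    then show ?thesis using Suc c by (auto simp: xx_Suc)
  qed
qed

end

theorem mainTheorem2:
  fixes V :: "'a set" and s0 s1 :: "'a \<Rightarrow> 'a" and org dst :: 'a
  assumes "switch_graph V s0 s1"
    and "org \<in> V" and "dst \<in> V" and "org \<noteq> dst"
    and "run_terminates s0 s1 org dst"
  shows "switching_flow V s0 s1 org dst (run_profile s0 s1 org dst)"
proof -
  define L where "L = run_length s0 s1 org dst"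
  define E where "E = sw_edges V s0 s1"
  have pL: "run_pos s0 s1 org L = dst"
    using assms(5) unfolding L_def run_length_def run_terminates_def by (rule LeastI_ex)
  have p0: "run_pos s0 s1 org 0 = org" by (simp add: run_pos_def run_state_def)
  have prof: "run_profile s0 s1 org dst = xx s0 s1 org L"
    by (rule ext) (simp add: run_profile_def xx_def L_def)
  have finE: "finite E" using assms(1) unfolding E_def sw_edges_def switch_graph_def by auto
  have edgeE: "(run_pos s0 s1 org i, run_pos s0 s1 org (Suc i)) \<in> E" for i
    using p_in[OF assms(2,1), where n=i] p_Suc[of s0 s1 org i] unfolding E_def sw_edges_def by auto
  show ?thesis unfolding switching_flow_def prof E_def[symmetric]
  proof
    fix v assume v: "v \<in> V"
    have fo: "finite (out_edges E v)" "finite (in_edges E v)"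
      using finE by (auto simp: out_edges_def in_edges_def)
    have hout: "(\<Sum>e\<in>out_edges E v. xx s0 s1 org L e) = card {i. i < L \<and> run_pos s0 s1 org i = v}"
      using sum_xx[OF fo(1), of s0 s1 org L] edgeE by (simp add: out_edges_def)
    have hin: "(\<Sum>e\<in>in_edges E v. xx s0 s1 org L e) = card {i. i < L \<and> run_pos s0 s1 org (Suc i) = v}"
      using sum_xx[OF fo(2), of s0 s1 org L] edgeE by (simp add: in_edges_def)
    have t: "int (\<Sum>e\<in>out_edges E v. xx s0 s1 org L e) - int (\<Sum>e\<in>in_edges E v. xx s0 s1 org L e)
       = (if v = org then 1 else if v = dst then -1 else 0)"
      using telescope_int[of s0 s1 org L dst v] pL p0 assms(4)
      unfolding hout hin by simp
    have b: "xx s0 s1 org L (v, s1 v) \<le> xx s0 s1 org L (v, s0 v) \<and>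
             xx s0 s1 org L (v, s0 v) \<le> xx s0 s1 org L (v, s1 v) + 1"
    proof (cases "s0 v = s1 v")
      case True then show ?thesis by simp
    next
      case False then show ?thesis using xx_sw[of s0 v s1 org L] False by auto
    qed
    show "int (\<Sum>e\<in>out_edges E v. xx s0 s1 org L e) - int (\<Sum>e\<in>in_edges E v. xx s0 s1 org L e)
       = (if v = org then 1 else if v = dst then -1 else 0) \<and>
       xx s0 s1 org L (v, s1 v) \<le> xx s0 s1 org L (v, s0 v) \<and>
       xx s0 s1 org L (v, s0 v) \<le> xx s0 s1 org L (v, s1 v) + 1"
      using t b by blast
  qed
qed

end
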